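(* Let $a_n$ denote the maximum degree of a minimal monomial generator of $J(P_n)$. For every $n\geq5$, $a_n=\max\{a_{n-2}+1,\,a_{n-3}+2\}$. For every $n\geq 2$, $$a_n=\begin{cases}2k & \text{if } n=3k+1 \text{ or } n=3k,\\ 2k+1 & \text{if } n=3k+2.\end{cases}$$
   Context: $P_n$ is the path graph on vertices $x_1,\ldots,x_n$ with edges $\{x_i,x_{i+1}\}$, $1\le i\le n-1$, and $J(P_n)\subset K[x_1,\ldots,x_n]$ ($K$ a field) is its cover ideal, generated by the monomials $\prod_{x\in C}x$ with $C$ a minimal vertex cover of $P_n$. *)

theory Defs
  imports Main
begin

definition path_edges :: "nat \<Rightarrow> nat set set" where
  "path_edges n = {{i, Suc i} | i. 1 \<le> i \<and> i < n}"

definition is_vertex_cover :: "nat \<Rightarrow> nat set \<Rightarrow> bool" where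
  "is_vertex_cover n C \<longleftrightarrow> C \<subseteq> {1..n} \<and> (\<forall>e\<in>path_edges n. e \<inter> C \<noteq> {})"

definition is_min_vertex_cover :: "nat \<Rightarrow> nat set \<Rightarrow> bool" where
  "is_min_vertex_cover n C \<longleftrightarrow> is_vertex_cover n C \<and> (\<forall>D. D \<subset> C \<longrightarrow> \<not> is_vertex_cover n D)"

text \<open>Monomials in x_1..x_n are represented by their exponent vectors
  (functions nat => nat supported on {1..n}); divisibility is pointwise <=.\<close>

definition monomials :: "nat \<Rightarrow> (nat \<Rightarrow> nat) set" where
  "monomials n = {m. \<forall>i. m i \<noteq> 0 \<longrightarrow> i \<in> {1..n}}"

definition mdeg :: "nat \<Rightarrow> (nat \<Rightarrow> nat) \<Rightarrow> nat" where
  "mdeg n m = (\<Sum>i\<in>{1..n}. m i)"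

definition cover_monomial :: "nat set \<Rightarrow> (nat \<Rightarrow> nat)" where
  "cover_monomial C = (\<lambda>i. if i \<in> C then 1 else 0)"

definition cover_gens :: "nat \<Rightarrow> (nat \<Rightarrow> nat) set" where
  "cover_gens n = cover_monomial ` {C. is_min_vertex_cover n C}"

definition ideal_monomials :: "nat \<Rightarrow> (nat \<Rightarrow> nat) set \<Rightarrow> (nat \<Rightarrow> nat) set" where
  "ideal_monomials n G = {m \<in> monomials n. \<exists>g\<in>G. g \<le> m}"

definition min_monomial_gens :: "nat \<Rightarrow> (nat \<Rightarrow> nat) set \<Rightarrow> (nat \<Rightarrow> nat) set" where
  "min_monomial_gens n G = {m \<in> ideal_monomials n G.
      \<forall>m'\<in>ideal_monomials n G. m' \<le> m \<longrightarrow> m' = m}"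

definition a_seq :: "nat \<Rightarrow> nat" where
  "a_seq n = Max (mdeg n ` min_monomial_gens n (cover_gens n))"

end

theory Submission
  imports Defs
begin

lemma cm_le: "cover_monomial C \<le> cover_monomial D \<longleftrightarrow> C \<subseteq> D"
  unfolding cover_monomial_def le_fun_def by (auto split: if_splits)

lemma cm_inj: "cover_monomial C = cover_monomial D \<longleftrightarrow> C = D"
  by (metis cm_le order_antisym order_refl)

lemma mvc_sub: "is_min_vertex_cover n C \<Longrightarrow> C \<subseteq> {1..n}"
  unfolding is_min_vertex_cover_def is_vertex_cover_def by blast

lemma gens_in: "cover_gens n \<subseteq> ideal_monomials n (cover_gens n)"
proof
  fix m assume m: "m \<in> cover_gens n"
  then obtain C where C: "is_min_vertex_cover n C" "m = cover_monomial C"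
    unfolding cover_gens_def by blast
  have "m \<in> monomials n" using mvc_sub[OF C(1)] C(2)
    unfolding monomials_def cover_monomial_def by auto
  then show "m \<in> ideal_monomials n (cover_gens n)"
    unfolding ideal_monomials_def using m by blast
qed

lemma min_gens: "min_monomial_gens n (cover_gens n) = cover_gens n"
proof
  show "min_monomial_gens n (cover_gens n) \<subseteq> cover_gens n"
  proof
    fix m assume m: "m \<in> min_monomial_gens n (cover_gens n)"
    then obtain g where g: "g \<in> cover_gens n" "g \<le> m"
      unfolding min_monomial_gens_def ideal_monomials_def by blast
    then have "g = m" using m gens_in unfolding min_monomial_gens_def by blast
    then show "m \<in> cover_gens n" using g by simp
  qed
next
  show "cover_gens n \<subseteq> min_monomial_gens n (cover_gens n)"
  proof
    fix m assume m: "m \<in> cover_gens n"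
    then obtain C where C: "is_min_vertex_cover n C" "m = cover_monomial C"
      unfolding cover_gens_def by blast
    have "m' = m" if h: "m' \<in> ideal_monomials n (cover_gens n)" "m' \<le> m" for m'
    proof -
      obtain g where g: "g \<in> cover_gens n" "g \<le> m'"
        using h(1) unfolding ideal_monomials_def by blast
      then obtain D where D: "is_min_vertex_cover n D" "g = cover_monomial D"
        unfolding cover_gens_def by blast
      have "D \<subseteq> C" using g(2) h(2) C(2) D(2) cm_le order_trans by metis
      then have "D = C" using C(1) D(1) unfolding is_min_vertex_cover_def by blast
      then have "g = m" using C D by simp
      then show ?thesis using g(2) h(2) by simp
    qed
    then show "m \<in> min_monomial_gens n (cover_gens n)"
      unfolding min_monomial_gens_def using gens_in m by blast
  qed
qed

lemma mdeg_cm: "C \<subseteq> {1..n} \<Longrightarrow> mdeg n (cover_monomial C) = card C"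
proof -
  assume a: "C \<subseteq> {1..n}"
  have "mdeg n (cover_monomial C) = (\<Sum>i\<in>{1..n}. if i \<in> C then 1 else 0)"
    unfolding mdeg_def cover_monomial_def by simp
  also have "\<dots> = card ({1..n} \<inter> C)" by (simp add: sum.If_cases)
  also have "{1..n} \<inter> C = C" using a by blast
  finally show ?thesis .
qed

lemma a_seq_card: "a_seq n = Max (card ` {C. is_min_vertex_cover n C})"
proof -
  have "mdeg n ` cover_gens n = card ` {C. is_min_vertex_cover n C}"
    unfolding cover_gens_def image_image using mdeg_cm mvc_sub
    by (intro image_cong) auto
  then show ?thesis unfolding a_seq_def min_gens by simp
qed




lemma edge_in: "1 \<le> i \<Longrightarrow> i < n \<Longrightarrow> {i, Suc i} \<in> path_edges n"
  unfolding path_edges_def by (rule CollectI, rule exI[of _ i]) simp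

lemma vc_edge: "is_vertex_cover n C \<Longrightarrow> 1 \<le> i \<Longrightarrow> i < n \<Longrightarrow> i \<in> C \<or> Suc i \<in> C"
proof -
  assume a: "is_vertex_cover n C" "1 \<le> i" "i < n"
  have "{i, Suc i} \<in> path_edges n" using edge_in a(2,3) .
  then have "{i, Suc i} \<inter> C \<noteq> {}" using a(1) unfolding is_vertex_cover_def by blast
  then show ?thesis by auto
qed

lemma mvc_nb:
  assumes C: "is_min_vertex_cover n C" and v: "v \<in> C"
  shows "\<exists>u. u \<notin> C \<and> u \<in> {1..n} \<and> (u = Suc v \<or> v = Suc u)"
proof (rule ccontr)
  assume nb: "\<not> ?thesis"
  have vc: "is_vertex_cover n C" using C unfolding is_min_vertex_cover_def by blast
  have "is_vertex_cover n (C - {v})"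
    unfolding is_vertex_cover_def
  proof (intro conjI ballI)
    show "C - {v} \<subseteq> {1..n}" using vc unfolding is_vertex_cover_def by blast
  next
    fix e assume "e \<in> path_edges n"
    then obtain i where e: "e = {i, Suc i}" "1 \<le> i" "i < n" unfolding path_edges_def by blast
    have "i \<in> C \<or> Suc i \<in> C" using vc_edge[OF vc e(2,3)] .
    moreover have "i \<in> C" if "v = Suc i"
    proof -
      have "\<not> (i \<notin> C \<and> i \<in> {1..n} \<and> (i = Suc v \<or> v = Suc i))" using nb by blast
      then show ?thesis using that e by simp
    qed
    moreover have "Suc i \<in> C" if "v = i"
    proof -
      have "\<not> (Suc i \<notin> C \<and> Suc i \<in> {1..n} \<and> (Suc i = Suc v \<or> v = Suc (Suc i)))" using nb by blast
      then show ?thesis using that e by simp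
    qed
    ultimately show "e \<inter> (C - {v}) \<noteq> {}" using e by auto
  qed
  moreover have "C - {v} \<subset> C" using v by blast
  ultimately show False using C unfolding is_min_vertex_cover_def by blast
qed

lemma count_lb:
  assumes "finite S" "\<forall>j<m. \<exists>x\<in>S. h x = j"
  shows "m \<le> card S"
proof -
  have "{..<m} \<subseteq> h ` S"
  proof
    fix j assume "j \<in> {..<m}"
    then obtain x where "x \<in> S" "h x = j" using assms(2) by auto
    then show "j \<in> h ` S" by blast
  qed
  then have "card {..<m} \<le> card (h ` S)" using assms(1) card_mono by blast
  also have "\<dots> \<le> card S" using assms(1) card_image_le by blast
  finally show ?thesis by simp
qed

lemma upper:
  assumes C: "is_min_vertex_cover n C" and n: "n \<ge> 2"
  shows "card C \<le> n - (n + 2) div 3"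
proof -
  define S where "S = {1..n} - C"
  have Csub: "C \<subseteq> {1..n}" using C unfolding is_min_vertex_cover_def is_vertex_cover_def by blast
  have win: "\<exists>x\<in>S. x \<in> {i, Suc i, Suc (Suc i)}" if "1 \<le> i" "Suc (Suc i) \<le> n" for i
  proof (rule ccontr)
    assume "\<not> ?thesis"
    then have "i \<in> C" "Suc i \<in> C" "Suc (Suc i) \<in> C" using that unfolding S_def by auto
    then obtain u where u: "u \<notin> C" "u = Suc (Suc i) \<or> Suc i = Suc u" using mvc_nb[OF C, of "Suc i"] by blast
    then show False using \<open>i \<in> C\<close> \<open>Suc (Suc i) \<in> C\<close> by auto
  qed
  have w1: "\<exists>x\<in>S. x \<in> {1, Suc 1}"
  proof (rule ccontr)
    assume "\<not> ?thesis"
    then have "1 \<in> C" "Suc 1 \<in> C" using n unfolding S_def by auto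
    then obtain u where u: "u \<notin> C" "u \<in> {1..n}" "u = Suc 1 \<or> 1 = Suc u" using mvc_nb[OF C, of 1] by blast
    then show False using \<open>Suc 1 \<in> C\<close> by auto
  qed
  have w2: "\<exists>x\<in>S. x \<in> {n - 1, n}"
  proof (rule ccontr)
    assume "\<not> ?thesis"
    then have "n - 1 \<in> C" "n \<in> C" using n unfolding S_def by auto
    then obtain u where u: "u \<notin> C" "u \<in> {1..n}" "u = Suc n \<or> n = Suc u" using mvc_nb[OF C, of n] by blast
    then have "u = n - 1" by auto
    then show False using u \<open>n - 1 \<in> C\<close> by blast
  qed
  have fS: "finite S" unfolding S_def by simp
  have lb: "(n + 2) div 3 \<le> card S"
  proof (cases "n mod 3 = 0")
    case True
    have "\<forall>j<n div 3. \<exists>x\<in>S. (x - 1) div 3 = j"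
    proof (intro allI impI)
      fix j assume j: "j < n div 3"
      have "Suc (Suc (3*j+1)) \<le> n" using j True by presburger
      then obtain x where "x \<in> S" "x \<in> {3*j+1, Suc (3*j+1), Suc (Suc (3*j+1))}"
        using win[of "3*j+1"] by auto
      moreover then have "x = 3*j+1 \<or> x = 3*j+2 \<or> x = 3*j+3" by auto
      then have "(x - 1) div 3 = j" by presburger
      ultimately show "\<exists>x\<in>S. (x - 1) div 3 = j" by blast
    qed
    from count_lb[OF fS this] show ?thesis using True by presburger
  next
    case False
    have "\<forall>j<Suc (n div 3). \<exists>x\<in>S. x div 3 = j"
    proof (intro allI impI)
      fix j assume j: "j < Suc (n div 3)"
      show "\<exists>x\<in>S. x div 3 = j"
      proof (cases "j = 0")
        case True
        obtain x where "x \<in> S" "x = 1 \<or> x = 2" using w1 by auto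
        moreover then have "x div 3 = 0" by auto
        ultimately show ?thesis using True by blast
      next
        case j0: False
        show ?thesis
        proof (cases "3*j+2 \<le> n")
          case True
          then obtain x where "x \<in> S" "x \<in> {3*j, Suc (3*j), Suc (Suc (3*j))}"
            using win[of "3*j"] j0 True by auto
          moreover then have "x = 3*j \<or> x = 3*j+1 \<or> x = 3*j+2" by auto
          then have "x div 3 = j" by presburger
          ultimately show ?thesis by blast
        next
          case nle: False
          then have "n = 3*j+1" using j False by presburger
          then obtain x where "x \<in> S" "x = 3*j \<or> x = 3*j+1" using w2 by auto
          moreover then have "x div 3 = j" by presburger
          ultimately show ?thesis by blast
        qed
      qed
    qed
    from count_lb[OF fS this] show ?thesis using False by presburger
  qed
  have fC: "finite C" using Csub finite_subset by blast
  have "card S = n - card C" unfolding S_def using card_Diff_subset[OF fC Csub] by simp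
  moreover have "card C \<le> n" using card_mono[OF _ Csub] by simp
  ultimately have "card C = n - card S" by simp
  then show ?thesis using lb by simp
qed



lemma lower:
  assumes n: "n \<ge> 2"
  shows "\<exists>C. is_min_vertex_cover n C \<and> card C = n - (n + 2) div 3"
proof -
  define r where "r = (if n mod 3 = 0 then 2 else (1::nat))"
  define S where "S = {i\<in>{1..n}. i mod 3 = r}"
  define C where "C = {i\<in>{1..n}. i mod 3 \<noteq> r}"
  have Csub: "C \<subseteq> {1..n}" unfolding C_def by blast
  have vc: "is_vertex_cover n C"
    unfolding is_vertex_cover_def
  proof (intro conjI ballI)
    show "C \<subseteq> {1..n}" by (rule Csub)
  next
    fix e assume "e \<in> path_edges n"
    then obtain i where e: "e = {i, Suc i}" "1 \<le> i" "i < n" unfolding path_edges_def by blast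
    have "i mod 3 \<noteq> r \<or> Suc i mod 3 \<noteq> r" by presburger
    then have "i \<in> C \<or> Suc i \<in> C" using e unfolding C_def by auto
    then show "e \<inter> C \<noteq> {}" using e by auto
  qed
  have nb: "\<exists>u. u \<in> {1..n} \<and> u \<notin> C \<and> (u = Suc v \<or> v = Suc u)" if v: "v \<in> C" for v
  proof -
    have v1: "1 \<le> v" "v \<le> n" "v mod 3 \<noteq> r" using v unfolding C_def by auto
    then obtain w where w: "v = Suc w" by (cases v) auto
    have w1: "Suc w \<le> n" "Suc w mod 3 \<noteq> r" using v1 w by auto
    have "(Suc (Suc w) \<le> n \<and> Suc (Suc w) mod 3 = r) \<or> (1 \<le> w \<and> w mod 3 = r)"
    proof (cases "n mod 3 = 0")
      case True
      then have "r = 2" unfolding r_def by simp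
      then show ?thesis using w1 True by presburger
    next
      case False
      then have "r = 1" unfolding r_def by simp
      then show ?thesis using w1 False by presburger
    qed
    then show ?thesis
    proof
      assume h: "Suc (Suc w) \<le> n \<and> Suc (Suc w) mod 3 = r"
      then have "Suc v \<in> {1..n}" "Suc v \<notin> C" unfolding C_def w by auto
      then show ?thesis by blast
    next
      assume h: "1 \<le> w \<and> w mod 3 = r"
      then have "w \<in> {1..n}" "w \<notin> C" using w1 unfolding C_def by auto
      then show ?thesis using w by blast
    qed
  qed
  have mvc: "is_min_vertex_cover n C"
    unfolding is_min_vertex_cover_def
  proof (intro conjI allI impI notI)
    show "is_vertex_cover n C" by (rule vc)
  next
    fix D assume D: "D \<subset> C" "is_vertex_cover n D"
    then obtain v where v: "v \<in> C" "v \<notin> D" by blast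
    then obtain u where u: "u \<in> {1..n}" "u \<notin> C" "u = Suc v \<or> v = Suc u" using nb by blast
    have uD: "u \<notin> D" using u(2) D(1) by blast
    have vr: "v \<in> {1..n}" using v(1) Csub by blast
    show False
      using u(3)
    proof
      assume "u = Suc v"
      then have "v \<in> D \<or> Suc v \<in> D" using vc_edge[OF D(2), of v] u(1) vr by auto
      then show False using v(2) uD \<open>u = Suc v\<close> by blast
    next
      assume "v = Suc u"
      then have "u \<in> D \<or> Suc u \<in> D" using vc_edge[OF D(2), of u] u(1) vr by auto
      then show False using v(2) uD \<open>v = Suc u\<close> by blast
    qed
  qed
  have Simg: "S = (\<lambda>j. 3 * j + r) ` {..<(n + 2) div 3}"
  proof (intro equalityI subsetI)
    fix i assume "i \<in> S"
    then have i: "1 \<le> i" "i \<le> n" "i mod 3 = r" unfolding S_def by auto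
    have r12: "r = 1 \<or> (r = 2 \<and> n mod 3 = 0)" unfolding r_def by simp
    have "i = 3 * (i div 3) + r" using i(3) by presburger
    moreover have "i div 3 < (n + 2) div 3" using i r12 by presburger
    ultimately show "i \<in> (\<lambda>j. 3 * j + r) ` {..<(n + 2) div 3}" by blast
  next
    fix i assume "i \<in> (\<lambda>j. 3 * j + r) ` {..<(n + 2) div 3}"
    then obtain j where j: "j < (n + 2) div 3" "i = 3 * j + r" by blast
    have r12: "(r = 1 \<and> n mod 3 \<noteq> 0) \<or> (r = 2 \<and> n mod 3 = 0)" unfolding r_def by simp
    have "1 \<le> i" "i \<le> n" "i mod 3 = r" using j r12 by presburger+
    then show "i \<in> S" unfolding S_def by auto
  qed
  have "inj_on (\<lambda>j. 3 * j + r) {..<(n + 2) div 3}" by (rule inj_onI) simp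
  then have cS: "card S = (n + 2) div 3" unfolding Simg by (simp add: card_image)
  have "C = {1..n} - S" unfolding C_def S_def by blast
  moreover have "S \<subseteq> {1..n}" unfolding S_def by blast
  ultimately have "card C = n - card S"
    by (simp add: card_Diff_subset finite_subset)
  then show ?thesis using mvc cS by auto
qed


lemma a_seq_val:
  assumes n: "n \<ge> 2"
  shows "a_seq n = 2 * n div 3"
proof -
  define M where "M = {C. is_min_vertex_cover n C}"
  have "M \<subseteq> Pow {1..n}" unfolding M_def using mvc_sub by blast
  then have fM: "finite M" using finite_subset by blast
  obtain C0 where C0: "is_min_vertex_cover n C0" "card C0 = n - (n + 2) div 3"
    using lower[OF n] by blast
  have "Max (card ` M) = n - (n + 2) div 3"
  proof (rule Max_eqI)
    show "finite (card ` M)" using fM by simp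
  next
    fix y assume "y \<in> card ` M"
    then show "y \<le> n - (n + 2) div 3" unfolding M_def using upper n by auto
  next
    show "n - (n + 2) div 3 \<in> card ` M" unfolding M_def using C0 by force
  qed
  moreover have "n - (n + 2) div 3 = 2 * n div 3" by presburger
  ultimately show ?thesis unfolding a_seq_card M_def by simp
qed

theorem lemma5p2:
  shows "(\<forall>n\<ge>5. a_seq n = max (a_seq (n - 2) + 1) (a_seq (n - 3) + 2))
       \<and> (\<forall>n k. n \<ge> 2 \<longrightarrow>
            ((n = 3 * k + 1 \<or> n = 3 * k) \<longrightarrow> a_seq n = 2 * k)
          \<and> (n = 3 * k + 2 \<longrightarrow> a_seq n = 2 * k + 1))"
proof (intro conjI allI impI)
  fix n :: nat assume n: "n \<ge> 5"
  then obtain m where m: "n = m + 5" by (metis add.commute le_Suc_ex)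
  have e2: "n - 2 = m + 3" "n - 3 = m + 2" using m by auto
  have "2 * (m+5::nat) div 3 = max (2 * (m+3) div 3 + 1) (2 * (m+2) div 3 + 2)"
    by presburger
  then show "a_seq n = max (a_seq (n - 2) + 1) (a_seq (n - 3) + 2)"
    unfolding e2 using a_seq_val[of n] a_seq_val[of "m+3"] a_seq_val[of "m+2"] m by simp
next
  fix n k :: nat assume n: "n \<ge> 2" and h: "n = 3 * k + 1 \<or> n = 3 * k"
  have "2 * n div 3 = 2 * k" using h by presburger
  then show "a_seq n = 2 * k" using a_seq_val[OF n] by simp
next
  fix n k :: nat assume n: "n \<ge> 2" and h: "n = 3 * k + 2"
  have "2 * n div 3 = 2 * k + 1" using h by presburger
  then show "a_seq n = 2 * k + 1" using a_seq_val[OF n] by simp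
qed

end
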